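(* For all positive integers $r$ and $k$, $$\bar T(\{1\}_{r-1},k)=\sum_{j=1}^r(-1)^{j-1}\,\bar T(\{1\}_{r-j})\,W(k+j-1,j),$$ with $\bar T(\emptyset):=1$.
   Context: $\{1\}_a$ denotes the sequence of $a$ ones. For positive integers $k_1,\dots,k_r$, $\bar T(k_1,\ldots,k_r):=2^r\sum_{0<n_1<\cdots<n_r}\frac{(-1)^{n_r}}{(2n_1-1)^{k_1}(2n_2-2)^{k_2}\cdots(2n_r-r)^{k_r}}$. $I(k,r)$ is the set of tuples $(k_1,\dots,k_r)$ of positive integers with sum $k$, and $W(k,r):=\sum_{(k_1,\dots,k_r)\in I(k,r)}\bar T(k_1,\dots,k_r)$. *)

theory Defs
  imports Complex_Main
begin

definition idx_tuples :: "nat \<Rightarrow> nat \<Rightarrow> nat list set" where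
  "idx_tuples r N = {ns. length ns = r \<and> sorted_wrt (<) ns \<and> (\<forall>n\<in>set ns. 0 < n) \<and>
                          ns \<noteq> [] \<and> last ns = N}"

definition Tbar_layer :: "nat list \<Rightarrow> nat \<Rightarrow> real" where
  "Tbar_layer ks N = (-1) ^ N *
     (\<Sum>ns\<in>idx_tuples (length ks) N.
        \<Prod>i<length ks. 1 / (2 * real (ns ! i) - real (i + 1)) ^ (ks ! i))"

text \<open>The (conditionally convergent) series is summed in the order of the outermost
  index n_r; empty tuple gives 1.\<close>
definition Tbar :: "nat list \<Rightarrow> real" where
  "Tbar ks = (if ks = [] then 1 else 2 ^ length ks * (\<Sum>N. Tbar_layer ks N))"

definition Iset :: "nat \<Rightarrow> nat \<Rightarrow> nat list set" where
  "Iset k r = {ks. length ks = r \<and> (\<forall>x\<in>set ks. 0 < x) \<and> sum_list ks = k}"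

definition W :: "nat \<Rightarrow> nat \<Rightarrow> real" where
  "W k r = (\<Sum>ks\<in>Iset k r. Tbar ks)"

end

theory Submission
  imports Defs "HOL-Computational_Algebra.Formal_Power_Series"
begin

unbundle fps_syntax

definition dd :: "nat list \<Rightarrow> nat \<Rightarrow> real" where
  "dd ks N = (if ks = [] then (if N = 0 then 1 else 0) else (-1) ^ N * Tbar_layer ks N)"

definition DD :: "nat list \<Rightarrow> nat \<Rightarrow> real" where
  "DD ks N = (\<Sum>N'<N. dd ks N')"

lemma sorted_le_last:
  fixes ns :: "nat list"
  assumes "sorted_wrt (<) ns" "ns \<noteq> []" "x \<in> set ns"
  shows "x \<le> last ns"
proof -
  have "ns = butlast ns @ [last ns]" using assms(2) by simp
  then have "sorted_wrt (<) (butlast ns @ [last ns])" using assms(1) by simp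
  then have "\<forall>y\<in>set (butlast ns). y < last ns" by (simp add: sorted_wrt_append)
  moreover have "x \<in> set (butlast ns) \<or> x = last ns"
    using assms(2,3) by (metis \<open>ns = butlast ns @ [last ns]\<close> rotate1.simps(2) set_ConsD set_rotate1)
  ultimately show ?thesis by (metis less_or_eq_imp_le)
qed

lemma finite_idx_tuples: "finite (idx_tuples r N)"
proof -
  have "idx_tuples r N \<subseteq> {xs. set xs \<subseteq> {..N} \<and> length xs = r}"
    unfolding idx_tuples_def using sorted_le_last by fastforce
  moreover have "finite {xs. set xs \<subseteq> {..N} \<and> length xs = r}"
    by (rule finite_lists_length_eq) simp
  ultimately show ?thesis by (rule finite_subset)
qed

lemma idx_tuples_1: "idx_tuples (Suc 0) N = (if N > 0 then {[N]} else {})"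
  unfolding idx_tuples_def by (auto simp: length_Suc_conv)

lemma idx_tuples_snoc:
  assumes "r \<ge> 1"
  shows "idx_tuples (Suc r) N = (\<lambda>(N', ns). ns @ [N]) ` (SIGMA N':{..<N}. idx_tuples r N')"
proof (rule set_eqI, rule iffI)
  fix xs assume xs: "xs \<in> idx_tuples (Suc r) N"
  then have len: "length xs = Suc r" and sw: "sorted_wrt (<) xs" and pos: "\<forall>n\<in>set xs. 0 < n"
    and ne: "xs \<noteq> []" and la: "last xs = N" unfolding idx_tuples_def by auto
  define ys where "ys = butlast xs"
  have xs_eq: "xs = ys @ [N]" using ne la ys_def by (metis append_butlast_last_id)
  have ysne: "ys \<noteq> []" using len assms ys_def by (cases xs rule: rev_cases) auto
  have sw2: "sorted_wrt (<) (ys @ [N])" using sw xs_eq by simp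
  then have swy: "sorted_wrt (<) ys" and lt: "\<forall>y\<in>set ys. y < N" by (auto simp: sorted_wrt_append)
  have "last ys < N" using lt ysne by simp
  moreover have "ys \<in> idx_tuples r (last ys)"
    unfolding idx_tuples_def using swy ysne pos xs_eq len by auto
  ultimately show "xs \<in> (\<lambda>(N', ns). ns @ [N]) ` (SIGMA N':{..<N}. idx_tuples r N')"
    using xs_eq by force
next
  fix xs assume "xs \<in> (\<lambda>(N', ns). ns @ [N]) ` (SIGMA N':{..<N}. idx_tuples r N')"
  then obtain N' ys where N': "N' < N" and ys: "ys \<in> idx_tuples r N'" and xs: "xs = ys @ [N]"
    by auto
  have "\<forall>y\<in>set ys. y < N" using ys N' sorted_le_last unfolding idx_tuples_def
    by (metis (mono_tags, lifting) le_less_trans mem_Collect_eq)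
  moreover have "0 < N" using N' by simp
  ultimately show "xs \<in> idx_tuples (Suc r) N"
    using ys xs unfolding idx_tuples_def by (auto simp: sorted_wrt_append)
qed

lemma dd_snoc:
  "dd (ks @ [k]) N = DD ks N / (2 * real N - real (length ks + 1)) ^ k"
proof (cases "ks = []")
  case True
  have "Tbar_layer [k] N = (-1)^N * (if N > 0 then 1 / (2 * real N - 1) ^ k else 0)"
    unfolding Tbar_layer_def by (simp add: idx_tuples_1)
  moreover have "DD [] N = (if N > 0 then 1 else 0)"
    unfolding DD_def dd_def by (cases N) (auto simp: lessThan_Suc_eq_insert_0 sum.reindex)
  ultimately show ?thesis using True by (simp add: dd_def power_mult_distrib[symmetric] divide_inverse)
next
  case False
  define r where "r = length ks"
  have r1: "r \<ge> 1" using False r_def by (cases ks) auto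
  define f where "f = (\<lambda>ns. \<Prod>i<r. 1 / (2 * real (ns ! i) - real (i + 1)) ^ (ks ! i))"
  define q where "q = 1 / (2 * real N - real (r + 1)) ^ k"
  have inj: "inj_on (\<lambda>(N', ns). ns @ [N]) (SIGMA N':{..<N}. idx_tuples r N')"
  proof (rule inj_onI)
    fix x y assume x: "x \<in> (SIGMA N':{..<N}. idx_tuples r N')" and y: "y \<in> (SIGMA N':{..<N}. idx_tuples r N')"
      and e: "(case x of (N', ns) \<Rightarrow> ns @ [N]) = (case y of (N', ns) \<Rightarrow> ns @ [N])"
    obtain a ys b zs where xy: "x = (a, ys)" "y = (b, zs)" by (cases x, cases y) auto
    have "ys = zs" using e xy by simp
    moreover have "a = last ys" "b = last zs" using x y xy unfolding idx_tuples_def by auto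
    ultimately show "x = y" using xy by simp
  qed
  have prodeq: "(\<Prod>i<length (ks @ [k]). 1 / (2 * real ((ns @ [N]) ! i) - real (i + 1)) ^ ((ks @ [k]) ! i))
        = f ns * q" if "ns \<in> idx_tuples r N'" for ns N'
  proof -
    have ln: "length ns = r" using that unfolding idx_tuples_def by simp
    have "(\<Prod>i<length (ks @ [k]). 1 / (2 * real ((ns @ [N]) ! i) - real (i + 1)) ^ ((ks @ [k]) ! i))
        = (\<Prod>i<Suc r. 1 / (2 * real ((ns @ [N]) ! i) - real (i + 1)) ^ ((ks @ [k]) ! i))"
      using r_def by simp
    also have "\<dots> = (\<Prod>i<r. 1 / (2 * real ((ns @ [N]) ! i) - real (i + 1)) ^ ((ks @ [k]) ! i)) * q"
      using ln r_def by (simp add: prod.lessThan_Suc q_def nth_append)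
    also have "(\<Prod>i<r. 1 / (2 * real ((ns @ [N]) ! i) - real (i + 1)) ^ ((ks @ [k]) ! i)) = f ns"
      unfolding f_def using ln r_def by (intro prod.cong) (auto simp: nth_append)
    finally show ?thesis .
  qed
  have "Tbar_layer (ks @ [k]) N = (-1)^N * (\<Sum>ns\<in>idx_tuples (Suc r) N.
        \<Prod>i<length (ks @ [k]). 1 / (2 * real (ns ! i) - real (i + 1)) ^ ((ks @ [k]) ! i))"
    unfolding Tbar_layer_def using r_def by simp
  also have "(\<Sum>ns\<in>idx_tuples (Suc r) N.
        \<Prod>i<length (ks @ [k]). 1 / (2 * real (ns ! i) - real (i + 1)) ^ ((ks @ [k]) ! i))
      = (\<Sum>(N', ns)\<in>(SIGMA N':{..<N}. idx_tuples r N'). f ns * q)"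
    unfolding idx_tuples_snoc[OF r1] apply (subst sum.reindex[OF inj])
    apply (rule sum.cong[OF refl]) apply (erule SigmaE) apply hypsubst apply (simp only: prod.case comp_def)
    apply (erule prodeq) done
  also have "\<dots> = (\<Sum>N'<N. \<Sum>ns\<in>idx_tuples r N'. f ns * q)"
    by (subst sum.Sigma) (auto simp: finite_idx_tuples)
  also have "\<dots> = q * (\<Sum>N'<N. dd ks N')"
    unfolding dd_def Tbar_layer_def f_def r_def using False
    by (simp add: sum_distrib_left sum_distrib_right mult_ac)
  finally show ?thesis using False unfolding dd_def DD_def q_def r_def
    by (simp add: divide_inverse power_mult_distrib[symmetric])
qed

lemma dd_nil: "dd [] N = (if N = 0 then 1 else 0)"
  by (simp add: dd_def)

lemma dd_zero: "N < length ks \<Longrightarrow> dd ks N = 0"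
proof (induction ks arbitrary: N rule: rev_induct)
  case Nil then show ?case by simp
next
  case (snoc k ks)
  have "DD ks N = 0" unfolding DD_def using snoc by (intro sum.neutral) auto
  then show ?case by (simp add: dd_snoc)
qed

lemma DD_zero: "N \<le> length ks \<Longrightarrow> DD ks N = 0"
  unfolding DD_def by (intro sum.neutral) (auto intro: dd_zero)

lemma den_ge: "length ks < N \<Longrightarrow> real N \<le> 2 * real N - real (length ks + 1)"
  by simp

lemma dd_nonneg: "0 \<le> dd ks N"
proof (induction ks arbitrary: N rule: rev_induct)
  case Nil then show ?case by (simp add: dd_nil)
next
  case (snoc k ks)
  have D: "0 \<le> DD ks N" unfolding DD_def using snoc by (intro sum_nonneg) auto
  show ?case
  proof (cases "N \<le> length ks")
    case True then show ?thesis by (simp add: dd_snoc DD_zero)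
  next
    case False
    then have "0 < 2 * real N - real (length ks + 1)" using den_ge[of ks N] by simp
    then show ?thesis using D by (simp add: dd_snoc)
  qed
qed

lemma DD_nonneg: "0 \<le> DD ks N"
  unfolding DD_def by (intro sum_nonneg) (auto intro: dd_nonneg)

lemma DD_Suc: "DD ks (Suc N) = DD ks N + dd ks N"
  unfolding DD_def by simp

lemma sqrt_step: "2 * sqrt (real N) + 1 / sqrt (real (Suc N)) \<le> 2 * sqrt (real (Suc N))"
proof -
  define a where "a = sqrt (real N)"
  define b where "b = sqrt (real (Suc N))"
  have a0: "0 \<le> a" and b0: "0 < b" unfolding a_def b_def by auto
  have sq: "b * b = a * a + 1" unfolding a_def b_def by simp
  have e: "(a - b) * (a - b) = a * a - 2 * a * b + b * b" by (simp add: algebra_simps)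
  have "0 \<le> (a - b) * (a - b)" by simp
  then have "2 * a * b \<le> a * a + b * b" using e by linarith
  then have "1 \<le> 2 * (b - a) * b" using sq by (simp add: algebra_simps)
  then have "1 / b \<le> 2 * (b - a)" using b0 by (simp add: divide_simps)
  then show ?thesis unfolding a_def b_def by simp
qed

lemma sum_inv_sqrt: "(\<Sum>i<N. if i = 0 then 0 else 1 / sqrt (real i)) \<le> 2 * sqrt (real N)"
proof -
  have aux: "(\<Sum>i<Suc M. if i = 0 then 0 else 1 / sqrt (real i)) \<le> 2 * sqrt (real M)" for M
  proof (induction M)
    case 0 then show ?case by simp
  next
    case (Suc M)
    have "(\<Sum>i<Suc (Suc M). if i = 0 then 0 else 1 / sqrt (real i))
        = (\<Sum>i<Suc M. if i = 0 then 0 else 1 / sqrt (real i)) + 1 / sqrt (real (Suc M))"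
      by simp
    also have "\<dots> \<le> 2 * sqrt (real M) + 1 / sqrt (real (Suc M))" using Suc by simp
    also have "\<dots> \<le> 2 * sqrt (real (Suc M))" by (rule sqrt_step)
    finally show ?case .
  qed
  show ?thesis
  proof (cases N)
    case 0 then show ?thesis by simp
  next
    case (Suc M)
    have "(\<Sum>i<N. if i = 0 then 0 else 1 / sqrt (real i)) \<le> 2 * sqrt (real M)"
      using aux[of M] Suc by simp
    also have "\<dots> \<le> 2 * sqrt (real N)" using Suc by simp
    finally show ?thesis .
  qed
qed

lemma sqrt_div: "C * sqrt (real N) / real N = C / sqrt (real N)"
proof (cases "N = 0")
  case True then show ?thesis by simp
next
  case False
  have s: "sqrt (real N) > 0" using False by simp
  have "C * sqrt (real N) / real N = C * sqrt (real N) / (sqrt (real N) * sqrt (real N))" by simp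
  also have "\<dots> = C / sqrt (real N)" using s by (simp add: field_simps)
  finally show ?thesis .
qed

lemma DD_bound:
  assumes "\<forall>x\<in>set ks. 0 < x"
  shows "\<exists>C\<ge>0. \<forall>N. DD ks N \<le> C * sqrt (real N)"
  using assms
proof (induction ks rule: rev_induct)
  case Nil
  have "DD [] N \<le> 1 * sqrt (real N)" for N
  proof (cases N)
    case 0 then show ?thesis by (simp add: DD_def)
  next
    case (Suc M)
    have "DD [] N = 1" unfolding DD_def Suc by (simp add: dd_nil lessThan_Suc_eq_insert_0 sum.reindex)
    then show ?thesis using Suc by simp
  qed
  then show ?case by (intro exI[of _ 1]) auto
next
  case (snoc k ks)
  then obtain C where C0: "C \<ge> 0" and C: "\<And>N. DD ks N \<le> C * sqrt (real N)" by auto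
  have k1: "k \<ge> 1" using snoc.prems by auto
  have trm: "dd (ks @ [k]) N' \<le> C * (if N' = 0 then 0 else 1 / sqrt (real N'))" for N'
  proof (cases "N' \<le> length ks")
    case True then show ?thesis using C0 by (simp add: dd_snoc DD_zero)
  next
    case False
    define m where "m = 2 * real N' - real (length ks + 1)"
    have mN: "real N' \<le> m" using den_ge[of ks N'] False m_def by simp
    have N1: "N' \<ge> 1" using False by simp
    have "m \<le> m ^ k" using mN N1 k1 by (intro self_le_power) auto
    then have mk: "real N' \<le> m ^ k" using mN by linarith
    have "dd (ks @ [k]) N' = DD ks N' / m ^ k" by (simp add: dd_snoc m_def)
    also have "\<dots> \<le> DD ks N' / real N'"
      using mk N1 DD_nonneg[of ks N'] by (intro divide_left_mono) auto
    also have "\<dots> \<le> C * sqrt (real N') / real N'" using C N1 by (intro divide_right_mono) auto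
    also have "\<dots> = C * (1 / sqrt (real N'))"
      using sqrt_div[of C N'] by simp
    finally show ?thesis using N1 by simp
  qed
  have "DD (ks @ [k]) N \<le> 2 * C * sqrt (real N)" for N
  proof -
    have "DD (ks @ [k]) N \<le> (\<Sum>N'<N. C * (if N' = 0 then 0 else 1 / sqrt (real N')))"
      unfolding DD_def by (intro sum_mono trm)
    also have "\<dots> = C * (\<Sum>N'<N. (if N' = 0 then 0 else 1 / sqrt (real N')))"
      by (simp add: sum_distrib_left)
    also have "\<dots> \<le> C * (2 * sqrt (real N))" using C0 sum_inv_sqrt by (intro mult_left_mono) auto
    finally show ?thesis by simp
  qed
  then show ?case using C0 by (intro exI[of _ "2 * C"]) auto
qed

lemma dd_bound:
  assumes "\<forall>x\<in>set ks. 0 < x"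
  shows "\<exists>C\<ge>0. \<forall>N\<ge>1. dd ks N \<le> C / sqrt (real N)"
proof (cases ks rule: rev_exhaust)
  case Nil then show ?thesis by (intro exI[of _ 0]) (auto simp: dd_nil)
next
  case (snoc ks' k)
  then obtain C where C0: "C \<ge> 0" and C: "\<And>N. DD ks' N \<le> C * sqrt (real N)"
    using DD_bound[of ks'] assms by auto
  have k1: "k \<ge> 1" using assms snoc by auto
  have "dd ks N \<le> C / sqrt (real N)" if N1: "N \<ge> 1" for N
  proof (cases "N \<le> length ks'")
    case True then show ?thesis using C0 by (simp add: snoc dd_snoc DD_zero)
  next
    case False
    define m where "m = 2 * real N - real (length ks' + 1)"
    have mN: "real N \<le> m" using den_ge[of ks' N] False m_def by simp
    have "m \<le> m ^ k" using mN N1 k1 by (intro self_le_power) auto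
    then have mk: "real N \<le> m ^ k" using mN by linarith
    have "dd ks N = DD ks' N / m ^ k" by (simp add: snoc dd_snoc m_def)
    also have "\<dots> \<le> DD ks' N / real N"
      using mk N1 DD_nonneg[of ks' N] by (intro divide_left_mono) auto
    also have "\<dots> \<le> C * sqrt (real N) / real N" using C N1 by (intro divide_right_mono) auto
    also have "\<dots> = C / sqrt (real N)"
      by (rule sqrt_div)
    finally show ?thesis .
  qed
  then show ?thesis using C0 by blast
qed

lemma alt_summable:
  fixes e :: "nat \<Rightarrow> real"
  assumes e0: "e \<longlonglongrightarrow> 0" and bv: "summable (\<lambda>N. \<bar>e (Suc N) - e N\<bar>)"
  shows "summable (\<lambda>N. (-1) ^ N * e N)"
proof -
  define \<sigma> :: "nat \<Rightarrow> real" where "\<sigma> N = (if odd N then 1 else 0)" for N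
  have id: "(-1) ^ N * e N = (\<sigma> (Suc N) * e (Suc N) - \<sigma> N * e N) - \<sigma> (Suc N) * (e (Suc N) - e N)" for N
    unfolding \<sigma>_def by (cases "even N") (auto simp: algebra_simps)
  have l: "(\<lambda>N. \<sigma> N * e N) \<longlonglongrightarrow> 0"
  proof (rule real_tendsto_sandwich[where f="\<lambda>N. - \<bar>e N\<bar>" and h="\<lambda>N. \<bar>e N\<bar>"])
    show "\<forall>\<^sub>F n in sequentially. - \<bar>e n\<bar> \<le> \<sigma> n * e n" unfolding \<sigma>_def by (auto intro!: always_eventually)
    show "\<forall>\<^sub>F n in sequentially. \<sigma> n * e n \<le> \<bar>e n\<bar>" unfolding \<sigma>_def by (auto intro!: always_eventually)
    show "(\<lambda>N. - \<bar>e N\<bar>) \<longlonglongrightarrow> 0" using tendsto_minus[OF tendsto_rabs_zero[OF e0]] by simp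
    show "(\<lambda>N. \<bar>e N\<bar>) \<longlonglongrightarrow> 0" using tendsto_rabs_zero[OF e0] .
  qed
  have s1: "summable (\<lambda>N. \<sigma> (Suc N) * e (Suc N) - \<sigma> N * e N)"
    by (rule telescope_summable[OF l])
  have s2: "summable (\<lambda>N. \<sigma> (Suc N) * (e (Suc N) - e N))"
    by (rule summable_comparison_test[OF _ bv]) (auto simp: \<sigma>_def)
  show ?thesis unfolding id by (rule summable_diff[OF s1 s2])
qed

lemma inv_sqrt_telescope:
  assumes "M \<ge> 1"
  shows "1 / (real (Suc M) * sqrt (real (Suc M))) \<le> 2 * (1 / sqrt (real M) - 1 / sqrt (real (Suc M)))"
proof -
  define a where "a = sqrt (real M)"
  define b where "b = sqrt (real (Suc M))"
  have a0: "0 < a" using assms unfolding a_def by simp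
  have ab: "a < b" unfolding a_def b_def by simp
  have b0: "0 < b" using a0 ab by simp
  have bb: "b * b = real (Suc M)" unfolding b_def by simp
  have aa: "a * a = real M" unfolding a_def using assms by simp
  have h: "(b - a) * (b + a) = 1" using aa bb by (simp add: algebra_simps)
  have ba: "b - a = 1 / (b + a)" using h a0 b0 by (simp add: field_simps)
  have k1: "(b + a) * a \<le> (b + b) * b" using ab a0 b0 by (intro mult_mono) auto
  have key: "(b + a) * a * b \<le> 2 * (b * b * b)"
    using mult_right_mono[OF k1, of b] b0 by (simp add: algebra_simps)
  have pos: "0 < (b + a) * a * b" using a0 b0 by simp
  have "1 / (b * b * b) = 2 / (2 * (b * b * b))" by simp
  also have "\<dots> \<le> 2 / ((b + a) * a * b)" using key pos by (intro divide_left_mono) auto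
  also have "\<dots> = 2 * (1 / a - 1 / b)"
  proof -
    have "1 / a - 1 / b = (b - a) / (a * b)" using a0 b0 by (simp add: field_simps)
    also have "\<dots> = 1 / ((b + a) * a * b)" unfolding ba by (simp add: mult.assoc)
    finally show ?thesis by simp
  qed
  finally have "1 / (b * b * b) \<le> 2 * (1 / a - 1 / b)" .
  moreover have "real (Suc M) * sqrt (real (Suc M)) = b * b * b" using bb b_def by simp
  ultimately show ?thesis unfolding a_def b_def by simp
qed

lemma summable_inv_N_sqrt: "summable (\<lambda>N. 1 / (real N * sqrt (real N)))"
proof -
  have t: "summable (\<lambda>M. 2 * (1 / sqrt (real M) - 1 / sqrt (real (Suc M))))"
    by (intro summable_mult telescope_summable') 
       (rule tendsto_divide_0[OF tendsto_const filterlim_at_top_imp_at_infinity[OF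
          filterlim_compose[OF sqrt_at_top filterlim_real_sequentially]]])
  have "summable (\<lambda>M. 1 / (real (Suc M) * sqrt (real (Suc M))))"
  proof (rule summable_comparison_test'[OF t, of 1])
    fix n :: nat assume n: "1 \<le> n"
    have pos: "0 \<le> 1 / (real (Suc n) * sqrt (real (Suc n)))" by simp
    show "norm (1 / (real (Suc n) * sqrt (real (Suc n)))) \<le> 2 * (1 / sqrt (real n) - 1 / sqrt (real (Suc n)))"
      using inv_sqrt_telescope[OF n] by (simp only: real_norm_def abs_of_nonneg[OF pos])
  qed
  then show ?thesis by (subst summable_Suc_iff[symmetric])
qed

lemma pow_diff_le:
  fixes a b :: real
  assumes "0 \<le> b" "b \<le> a" "a \<le> 1"
  shows "a ^ k - b ^ k \<le> real k * (a - b)"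
proof (induction k)
  case 0 then show ?case by simp
next
  case (Suc k)
  have "a ^ Suc k - b ^ Suc k = a * (a ^ k - b ^ k) + b ^ k * (a - b)" by (simp add: algebra_simps)
  also have "\<dots> \<le> 1 * (real k * (a - b)) + 1 * (a - b)"
  proof (rule add_mono)
    have "a ^ k - b ^ k \<ge> 0" using assms by (simp add: power_mono)
    then show "a * (a ^ k - b ^ k) \<le> 1 * (real k * (a - b))"
      using Suc assms by (intro mult_mono) auto
    have "b ^ k \<le> 1" using assms by (simp add: power_le_one)
    then show "b ^ k * (a - b) \<le> 1 * (a - b)" using assms by (intro mult_right_mono) auto
  qed
  finally show ?case by (simp add: algebra_simps)
qed

lemma T1_bound:
  fixes d m1 C1 :: real
  assumes "0 \<le> d" "d \<le> C1 / sqrt (real N)" "real N + 1 \<le> m1" "N \<ge> 1" "k \<ge> 1"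
  shows "d / m1 ^ k \<le> C1 / (real N * sqrt (real N))"
proof -
  have m1: "1 \<le> m1" using assms by simp
  have "m1 \<le> m1 ^ k" using m1 assms by (intro self_le_power) auto
  then have "real N \<le> m1 ^ k" using assms by linarith
  then have "d / m1 ^ k \<le> d / real N" using assms by (intro divide_left_mono) auto
  also have "\<dots> \<le> C1 / sqrt (real N) / real N" using assms by (intro divide_right_mono) auto
  finally show ?thesis by (simp add: field_simps)
qed

lemma T2_bound:
  fixes D m0 C2 :: real
  assumes "0 \<le> D" "D \<le> C2 * sqrt (real N)" "real N \<le> m0" "N \<ge> 1"
  shows "D * (1 / m0 ^ k - 1 / (m0 + 2) ^ k) \<le> 2 * real k * C2 / (real N * sqrt (real N))"
proof -
  have m0: "1 \<le> m0" using assms by simp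
  have x0: "0 \<le> 1 / m0 ^ k - 1 / (m0 + 2) ^ k" using m0
    by (simp add: divide_simps power_mono)
  have "1 / m0 ^ k - 1 / (m0 + 2) ^ k = (1 / m0) ^ k - (1 / (m0 + 2)) ^ k" by (simp add: power_one_over)
  also have "\<dots> \<le> real k * (1 / m0 - 1 / (m0 + 2))" using m0
    by (intro pow_diff_le) (auto simp: divide_simps)
  also have "1 / m0 - 1 / (m0 + 2) = 2 / (m0 * (m0 + 2))" using m0 by (simp add: field_simps)
  also have "\<dots> \<le> 2 / (real N * real N)" using assms m0
    by (intro divide_left_mono mult_mono) auto
  finally have x1: "1 / m0 ^ k - 1 / (m0 + 2) ^ k \<le> real k * (2 / (real N * real N))"
    by (simp add: mult_left_mono)
  have "D * (1 / m0 ^ k - 1 / (m0 + 2) ^ k) \<le> C2 * sqrt (real N) * (real k * (2 / (real N * real N)))"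
    using assms x0 x1 by (intro mult_mono) auto
  also have "\<dots> = 2 * real k * C2 * (sqrt (real N) / (real N * real N))" by simp
  also have "sqrt (real N) / (real N * real N) = 1 / (real N * sqrt (real N))"
  proof -
    have "sqrt (real N) / (real N * real N) = (sqrt (real N) / real N) / real N" by simp
    also have "\<dots> = (1 / sqrt (real N)) / real N" using sqrt_div[of 1 N] by simp
    finally show ?thesis by (simp add: mult.commute)
  qed
  finally show ?thesis by simp
qed

lemma inv_sqrt_lim: "(\<lambda>N. C / sqrt (real N)) \<longlonglongrightarrow> 0"
  by (rule tendsto_divide_0[OF tendsto_const filterlim_at_top_imp_at_infinity[OF
          filterlim_compose[OF sqrt_at_top filterlim_real_sequentially]]])

lemma summable_dd:
  assumes "\<forall>x\<in>set ks. 0 < x"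
  shows "summable (\<lambda>N. (-1) ^ N * dd ks N)"
proof (cases ks rule: rev_exhaust)
  case Nil
  show ?thesis
    by (rule summable_comparison_test'[OF summable_zero, of 1]) (auto simp: Nil dd_nil)
next
  case (snoc ks' k)
  have pos': "\<forall>x\<in>set ks'. 0 < x" and k1: "k \<ge> 1" using assms snoc by auto
  obtain C1 where C10: "C1 \<ge> 0" and C1: "\<And>N. N \<ge> 1 \<Longrightarrow> dd ks' N \<le> C1 / sqrt (real N)"
    using dd_bound[OF pos'] by auto
  obtain C2 where C20: "C2 \<ge> 0" and C2: "\<And>N. DD ks' N \<le> C2 * sqrt (real N)"
    using DD_bound[OF pos'] by auto
  obtain C3 where C30: "C3 \<ge> 0" and C3: "\<And>N. N \<ge> 1 \<Longrightarrow> dd ks N \<le> C3 / sqrt (real N)"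
    using dd_bound[OF assms] by auto
  define e where "e N = dd ks N" for N
  have e0: "e \<longlonglongrightarrow> 0"
  proof (rule real_tendsto_sandwich[where f="\<lambda>N. 0" and h="\<lambda>N. C3 / sqrt (real N)"])
    show "\<forall>\<^sub>F n in sequentially. 0 \<le> e n" unfolding e_def by (auto intro!: always_eventually dd_nonneg)
    show "\<forall>\<^sub>F n in sequentially. e n \<le> C3 / sqrt (real n)"
      unfolding e_def using eventually_ge_at_top[of "1::nat"] by (rule eventually_mono) (rule C3)
  qed (auto intro: inv_sqrt_lim)
  define K where "K = C1 + 2 * real k * C2"
  have bnd: "norm \<bar>e (Suc N) - e N\<bar> \<le> K * (1 / (real N * sqrt (real N)))" if N1: "N \<ge> 1" for N
  proof -
    define m0 where "m0 = 2 * real N - real (length ks' + 1)"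
    define D where "D = DD ks' N"
    define d where "d = dd ks' N"
    have m1: "2 * real (Suc N) - real (length ks' + 1) = m0 + 2" unfolding m0_def by simp
    have eS: "e (Suc N) = (D + d) / (m0 + 2) ^ k"
      unfolding e_def snoc dd_snoc m1 D_def d_def DD_Suc ..
    have eN: "e N = D / m0 ^ k" unfolding e_def snoc dd_snoc m0_def D_def ..
    have diff: "e (Suc N) - e N = d / (m0 + 2) ^ k - D * (1 / m0 ^ k - 1 / (m0 + 2) ^ k)"
      unfolding eS eN by (simp add: field_simps add_divide_distrib)
    have t1: "0 \<le> d / (m0 + 2) ^ k \<and> d / (m0 + 2) ^ k \<le> C1 / (real N * sqrt (real N))"
    proof (cases "N < length ks'")
      case True
      then have "d = 0" unfolding d_def by (rule dd_zero)
      then show ?thesis using C10 by simp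
    next
      case False
      then have mm: "real N + 1 \<le> m0 + 2" unfolding m0_def by simp
      have "0 \<le> d" unfolding d_def by (rule dd_nonneg)
      moreover have "d / (m0 + 2) ^ k \<le> C1 / (real N * sqrt (real N))"
        using T1_bound[OF _ C1[OF N1] mm N1 k1] dd_nonneg unfolding d_def by blast
      ultimately show ?thesis using mm N1 by simp
    qed
    have t2: "0 \<le> D * (1 / m0 ^ k - 1 / (m0 + 2) ^ k) \<and>
              D * (1 / m0 ^ k - 1 / (m0 + 2) ^ k) \<le> 2 * real k * C2 / (real N * sqrt (real N))"
    proof (cases "N \<le> length ks'")
      case True
      then have "D = 0" unfolding D_def by (rule DD_zero)
      then show ?thesis using C20 by simp
    next
      case False
      then have mm: "real N \<le> m0" unfolding m0_def by simp
      have D0: "0 \<le> D" unfolding D_def by (rule DD_nonneg)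
      have m01: "1 \<le> m0" using mm N1 by simp
      have "0 \<le> 1 / m0 ^ k - 1 / (m0 + 2) ^ k" using m01
        by (simp add: divide_simps power_mono)
      then have "0 \<le> D * (1 / m0 ^ k - 1 / (m0 + 2) ^ k)" using D0 by simp
      moreover have "D * (1 / m0 ^ k - 1 / (m0 + 2) ^ k) \<le> 2 * real k * C2 / (real N * sqrt (real N))"
        using T2_bound[OF D0 _ mm N1] C2 unfolding D_def by blast
      ultimately show ?thesis by simp
    qed
    have "\<bar>e (Suc N) - e N\<bar> \<le> C1 / (real N * sqrt (real N)) + 2 * real k * C2 / (real N * sqrt (real N))"
      unfolding diff using t1 t2 by (simp add: abs_le_iff)
    also have "\<dots> = K * (1 / (real N * sqrt (real N)))" unfolding K_def by (simp add: add_divide_distrib)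
    finally show ?thesis by simp
  qed
  have bv: "summable (\<lambda>N. \<bar>e (Suc N) - e N\<bar>)"
    by (rule summable_comparison_test'[OF summable_mult[OF summable_inv_N_sqrt] bnd])
  show ?thesis using alt_summable[OF e0 bv] unfolding e_def .
qed


definition cc :: "nat list \<Rightarrow> nat \<Rightarrow> real" where
  "cc ks N = (-1) ^ N * dd ks N"

definition BB :: "nat list \<Rightarrow> real fps" where
  "BB ks = Abs_fps (cc ks)"

definition dl :: "nat \<Rightarrow> real fps \<Rightarrow> real fps" where
  "dl a f = fps_const 2 * (fps_X * fps_deriv f) - fps_const (real a) * f"

definition Dl :: "nat \<Rightarrow> real fps \<Rightarrow> real fps" where
  "Dl a f = (1 + fps_X) * dl a f"

lemma BB_nth: "BB ks $ N = cc ks N"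
  by (simp add: BB_def)

lemma th_nth: "(fps_X * fps_deriv f) $ N = real N * f $ N"
  by (cases N) (simp_all add: algebra_simps)

lemma dl_nth: "dl a f $ N = (2 * real N - real a) * f $ N"
  unfolding dl_def by (simp add: th_nth algebra_simps)

lemma BB_nil: "BB [] = 1"
  by (rule fps_ext) (simp add: BB_nth cc_def dd_nil)

lemma div_pow_pred:
  fixes m x :: real
  assumes "k \<ge> 2"
  shows "m * (x / m ^ k) = x / m ^ (k - 1)"
proof (cases "m = 0")
  case True then show ?thesis using assms by (simp add: power_0_left)
next
  case False
  obtain j where k: "k = Suc j" using assms by (cases k) auto
  show ?thesis using False by (simp add: k field_simps)
qed

lemma R1:
  assumes "k \<ge> 2"
  shows "dl (length ks + 1) (BB (ks @ [k])) = BB (ks @ [k - 1])"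
proof (rule fps_ext)
  fix N
  define m where "m = 2 * real N - real (length ks + 1)"
  have "dl (length ks + 1) (BB (ks @ [k])) $ N = m * ((-1)^N * (DD ks N / m ^ k))"
    unfolding dl_nth BB_nth cc_def dd_snoc m_def by simp
  also have "\<dots> = (-1)^N * (m * (DD ks N / m ^ k))" by (simp only: mult.left_commute)
  also have "\<dots> = (-1)^N * (DD ks N / m ^ (k - 1))" using div_pow_pred[OF assms] by simp
  also have "\<dots> = BB (ks @ [k - 1]) $ N"
    unfolding BB_nth cc_def dd_snoc m_def by simp
  finally show "dl (length ks + 1) (BB (ks @ [k])) $ N = BB (ks @ [k - 1]) $ N" .
qed

lemma dl_BB1_nth: "dl (length ks + 1) (BB (ks @ [1])) $ N = (-1) ^ N * DD ks N"
proof (cases "2 * real N - real (length ks + 1) = 0")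
  case True
  then have "N \<le> length ks" by linarith
  then show ?thesis unfolding dl_nth BB_nth using True by (simp add: DD_zero)
next
  case False
  then show ?thesis unfolding dl_nth BB_nth cc_def dd_snoc by (simp add: field_simps)
qed

lemma onePX_nth: fixes h :: "real fps" shows "((1 + fps_X) * h) $ N = h $ N + (if N = 0 then 0 else h $ (N - 1))"
  unfolding distrib_right by simp

lemma R2: "Dl (length ks + 1) (BB (ks @ [1])) = - (fps_X * BB ks)"
proof (rule fps_ext)
  fix N
  show "Dl (length ks + 1) (BB (ks @ [1])) $ N = (- (fps_X * BB ks)) $ N"
  proof (cases N)
    case 0
    then show ?thesis unfolding Dl_def onePX_nth dl_BB1_nth by (simp add: DD_def)
  next
    case (Suc M)
    have "Dl (length ks + 1) (BB (ks @ [1])) $ N = (-1) ^ Suc M * DD ks (Suc M) + (-1) ^ M * DD ks M"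
      unfolding Dl_def Suc onePX_nth dl_BB1_nth by simp
    also have "\<dots> = - ((-1) ^ M * dd ks M)" by (simp add: DD_Suc algebra_simps)
    finally show ?thesis using Suc by (simp add: BB_nth cc_def)
  qed
qed

lemma th_mult: fixes f g :: "real fps" shows "fps_X * fps_deriv (f * g) = (fps_X * fps_deriv f) * g + f * (fps_X * fps_deriv g)"
  by (simp add: ring_distribs mult_ac)

lemma Dl_mult: "Dl (a + b) (f * g) = Dl a f * g + f * Dl b g"
  unfolding Dl_def dl_def th_mult by (simp add: algebra_simps flip: fps_const_add)

lemma Dl_add: "Dl a (f + g) = Dl a f + Dl a g"
  unfolding Dl_def dl_def by (simp add: algebra_simps)

lemma Dl_diff: "Dl a (f - g) = Dl a f - Dl a g"
  unfolding Dl_def dl_def by (simp add: algebra_simps)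

lemma Dl_zero [simp]: "Dl a 0 = 0"
  unfolding Dl_def dl_def by simp

lemma Dl_sum: "Dl a (\<Sum>i\<in>S. f i) = (\<Sum>i\<in>S. Dl a (f i))"
  by (induction S rule: infinite_finite_induct) (simp_all add: Dl_add)

lemma Dl_cmult: "Dl a (fps_const c * f) = fps_const c * Dl a f"
  unfolding Dl_def dl_def by (simp add: algebra_simps)

lemma Dl_zero_one: "Dl 0 1 = 0"
  unfolding Dl_def dl_def by simp


definition EE :: "nat \<Rightarrow> real fps" where
  "EE m = BB (replicate m 1)"

definition GG :: "nat \<Rightarrow> nat \<Rightarrow> real fps" where
  "GG j w = (\<Sum>c\<in>Iset w j. BB c)"

definition RR :: "nat \<Rightarrow> nat \<Rightarrow> real fps" where
  "RR r k = (\<Sum>j=1..r. fps_const ((-1) ^ (j - 1)) * (EE (r - j) * GG j (k + j - 1)))"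

definition low :: "nat \<Rightarrow> real fps \<Rightarrow> bool" where
  "low a f \<longleftrightarrow> (\<forall>N<a. f $ N = 0)"

lemma finite_Iset: "finite (Iset w j)"
proof -
  have "Iset w j \<subseteq> {xs. set xs \<subseteq> {..w} \<and> length xs = j}"
    unfolding Iset_def by (auto dest: member_le_sum_list)
  moreover have "finite {xs. set xs \<subseteq> {..w} \<and> length xs = j}"
    by (rule finite_lists_length_eq) simp
  ultimately show ?thesis by (rule finite_subset)
qed

lemma sum_list_ge_length: "\<forall>x\<in>set ks. 0 < x \<Longrightarrow> length ks \<le> sum_list ks"
  by (induction ks) auto

lemma Iset_small:
  assumes "w < j" shows "Iset w j = {}"
proof -
  { fix c assume "c \<in> Iset w j"
    then have "length c \<le> sum_list c" "length c = j" "sum_list c = w"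
      unfolding Iset_def using sum_list_ge_length by auto
    then have False using assms by simp }
  then show ?thesis by blast
qed

lemma Iset_0: "Iset w 0 = (if w = 0 then {[]} else {})"
  unfolding Iset_def by auto

lemma Iset_split:
  assumes "j \<ge> 1" "w \<ge> 1"
  shows "Iset w j = (\<lambda>c. c @ [1]) ` Iset (w - 1) (j - 1) \<union>
                    (\<lambda>c. butlast c @ [Suc (last c)]) ` Iset (w - 1) j"
proof (rule set_eqI, rule iffI)
  fix c assume c: "c \<in> Iset w j"
  then have cne: "c \<noteq> []" using assms unfolding Iset_def by auto
  define b where "b = butlast c"
  define a where "a = last c"
  have ceq: "c = b @ [a]" using cne a_def b_def by simp
  have a0: "a > 0" and bpos: "\<forall>x\<in>set b. 0 < x" and lb: "length b = j - 1"
    and sb: "sum_list b + a = w" using c ceq unfolding Iset_def by auto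
  show "c \<in> (\<lambda>c. c @ [1]) ` Iset (w - 1) (j - 1) \<union> (\<lambda>c. butlast c @ [Suc (last c)]) ` Iset (w - 1) j"
  proof (cases "a = 1")
    case True
    then have "b \<in> Iset (w - 1) (j - 1)" using bpos lb sb unfolding Iset_def by auto
    then show ?thesis using ceq True by auto
  next
    case False
    then have a2: "a \<ge> 2" using a0 by simp
    have "b @ [a - 1] \<in> Iset (w - 1) j" using bpos lb sb a2 assms unfolding Iset_def by auto
    moreover have "c = butlast (b @ [a - 1]) @ [Suc (last (b @ [a - 1]))]" using ceq a2 by simp
    ultimately show ?thesis by blast
  qed
next
  fix c assume "c \<in> (\<lambda>c. c @ [1]) ` Iset (w - 1) (j - 1) \<union> (\<lambda>c. butlast c @ [Suc (last c)]) ` Iset (w - 1) j"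
  then show "c \<in> Iset w j"
  proof
    assume "c \<in> (\<lambda>c. c @ [1]) ` Iset (w - 1) (j - 1)"
    then obtain b where "b \<in> Iset (w - 1) (j - 1)" "c = b @ [1]" by auto
    then show ?thesis using assms unfolding Iset_def by auto
  next
    assume "c \<in> (\<lambda>c. butlast c @ [Suc (last c)]) ` Iset (w - 1) j"
    then obtain b where b: "b \<in> Iset (w - 1) j" and c: "c = butlast b @ [Suc (last b)]" by auto
    have bne: "b \<noteq> []" using b assms unfolding Iset_def by auto
    have beq: "b = butlast b @ [last b]" using bne by simp
    have "sum_list b = sum_list (butlast b) + last b" by (subst beq) simp
    moreover have "set (butlast b) \<subseteq> set b" by (rule in_set_butlastD[THEN subsetI])
    ultimately show ?thesis using b c bne assms unfolding Iset_def by auto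
  qed
qed

lemma DE: "m \<ge> 1 \<Longrightarrow> Dl m (EE m) = - (fps_X * EE (m - 1))"
proof -
  assume m: "m \<ge> 1"
  have "replicate m (1::nat) = replicate (m - 1) 1 @ [1]" using m
    by (cases m) (simp_all add: replicate_append_same)
  then show ?thesis using R2[of "replicate (m - 1) 1"] m unfolding EE_def by simp
qed

lemma EE_0: "EE 0 = 1"
  unfolding EE_def by (simp add: BB_nil)

lemma GG_0: "GG 0 w = (if w = 0 then 1 else 0)"
  unfolding GG_def Iset_0 by (simp add: BB_nil)

lemma GG_small: "w < j \<Longrightarrow> GG j w = 0"
  unfolding GG_def by (simp add: Iset_small)

lemma DG:
  assumes "j \<ge> 1" "w \<ge> 1"
  shows "Dl j (GG j w) = (1 + fps_X) * GG j (w - 1) - fps_X * GG (j - 1) (w - 1)"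
proof -
  let ?A = "(\<lambda>c. c @ [1]) ` Iset (w - 1) (j - 1)"
  let ?B = "(\<lambda>c. butlast c @ [Suc (last c)]) ` Iset (w - 1) j"
  have injA: "inj_on (\<lambda>c. c @ [1::nat]) (Iset (w - 1) (j - 1))" by (auto intro: inj_onI)
  have injB: "inj_on (\<lambda>c. butlast c @ [Suc (last c)]) (Iset (w - 1) j)"
  proof (rule inj_onI)
    fix x y assume x: "x \<in> Iset (w - 1) j" and y: "y \<in> Iset (w - 1) j"
      and e: "butlast x @ [Suc (last x)] = butlast y @ [Suc (last y)]"
    have "x \<noteq> []" "y \<noteq> []" using x y assms unfolding Iset_def by auto
    moreover have "butlast x = butlast y" "last x = last y" using e by auto
    ultimately show "x = y" by (metis append_butlast_last_id)
  qed
  have disj: "?A \<inter> ?B = {}"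
  proof -
    have "\<not> (b @ [1] = butlast c @ [Suc (last c)])" if "c \<in> Iset (w - 1) j" for b c
    proof -
      have "c \<noteq> []" using that assms unfolding Iset_def by auto
      then have "last c \<in> set c" by (rule last_in_set)
      then show ?thesis using that unfolding Iset_def by auto
    qed
    then show ?thesis by blast
  qed
  have lenA: "length c + 1 = j" if "c \<in> Iset (w - 1) (j - 1)" for c
    using that assms unfolding Iset_def by auto
  have lenB: "length (butlast c) + 1 = j" and lastB: "Suc (last c) \<ge> 2" and bl: "butlast c @ [last c] = c"
    if "c \<in> Iset (w - 1) j" for c
  proof -
    have cne: "c \<noteq> []" using that assms unfolding Iset_def by auto
    then have "last c \<in> set c" by (rule last_in_set)
    then show "Suc (last c) \<ge> 2" using that unfolding Iset_def by auto
    show "length (butlast c) + 1 = j" using that cne unfolding Iset_def by auto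
    show "butlast c @ [last c] = c" using cne by simp
  qed
  have "Dl j (GG j w) = (\<Sum>c\<in>?A \<union> ?B. Dl j (BB c))"
    unfolding GG_def Dl_sum Iset_split[OF assms] ..
  also have "\<dots> = (\<Sum>c\<in>?A. Dl j (BB c)) + (\<Sum>c\<in>?B. Dl j (BB c))"
    by (intro sum.union_disjoint finite_imageI finite_Iset disj)
  also have "(\<Sum>c\<in>?A. Dl j (BB c)) = (\<Sum>c\<in>Iset (w - 1) (j - 1). Dl j (BB (c @ [1])))"
    by (rule sum.reindex[OF injA, unfolded comp_def])
  also have "\<dots> = (\<Sum>c\<in>Iset (w - 1) (j - 1). - (fps_X * BB c))"
    by (rule sum.cong[OF refl]) (metis R2 lenA)
  also have "(\<Sum>c\<in>?B. Dl j (BB c)) = (\<Sum>c\<in>Iset (w - 1) j. Dl j (BB (butlast c @ [Suc (last c)])))"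
    by (rule sum.reindex[OF injB, unfolded comp_def])
  also have "\<dots> = (\<Sum>c\<in>Iset (w - 1) j. (1 + fps_X) * BB c)"
  proof (rule sum.cong[OF refl])
    fix c assume c: "c \<in> Iset (w - 1) j"
    have "Dl j (BB (butlast c @ [Suc (last c)])) = (1 + fps_X) * dl (length (butlast c) + 1) (BB (butlast c @ [Suc (last c)]))"
      unfolding Dl_def lenB[OF c] ..
    also have "\<dots> = (1 + fps_X) * BB (butlast c @ [Suc (last c) - 1])"
      using R1[OF lastB[OF c], of "butlast c"] by (simp only:)
    also have "\<dots> = (1 + fps_X) * BB c" using bl[OF c] by simp
    finally show "Dl j (BB (butlast c @ [Suc (last c)])) = (1 + fps_X) * BB c" .
  qed
  finally show ?thesis unfolding GG_def by (simp add: sum_distrib_left sum_negf)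
qed

lemma low_BB: "low (length ks) (BB ks)"
  unfolding low_def BB_nth cc_def by (simp add: dd_zero)

lemma low_mult:
  assumes "low a f" "low b g" shows "low (a + b) (f * g)"
  unfolding low_def fps_mult_nth
proof (intro allI impI sum.neutral ballI)
  fix N i assume N: "N < a + b" and i: "i \<in> {0..N}"
  show "f $ i * g $ (N - i) = 0"
  proof (cases "i < a")
    case True then show ?thesis using assms(1) unfolding low_def by simp
  next
    case False
    moreover have "i \<le> N" using i by simp
    ultimately have "N - i < b" using N by arith
    then show ?thesis using assms(2) unfolding low_def by simp
  qed
qed

lemma low_sum: "(\<And>i. i \<in> S \<Longrightarrow> low a (f i)) \<Longrightarrow> low a (\<Sum>i\<in>S. f i)"
  unfolding low_def fps_sum_nth by (auto intro!: sum.neutral)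

lemma low_const: "low a f \<Longrightarrow> low a (fps_const c * f)"
  unfolding low_def by simp

lemma low_EE: "low m (EE m)"
  unfolding EE_def using low_BB[of "replicate m 1"] by simp

lemma low_GG: "low j (GG j w)"
  unfolding GG_def
proof (rule low_sum)
  fix c assume "c \<in> Iset w j"
  then have "length c = j" unfolding Iset_def by auto
  then show "low j (BB c)" using low_BB[of c] by simp
qed

lemma low_RR: "low r (RR r k)"
  unfolding RR_def
proof (rule low_sum)
  fix j assume j: "j \<in> {1..r}"
  have "low (r - j + j) (EE (r - j) * GG j (k + j - 1))" by (intro low_mult low_EE low_GG)
  then show "low r (fps_const ((-1) ^ (j - 1)) * (EE (r - j) * GG j (k + j - 1)))"
    using j by (intro low_const) simp
qed

lemma Dl_unique:
  assumes r: "r \<ge> 1" and D: "Dl r f = Dl r g" and lf: "low r f" and lg: "low r g"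
  shows "f = g"
proof -
  have ne: "(1 + fps_X :: real fps) \<noteq> 0"
  proof
    assume "(1 + fps_X :: real fps) = 0"
    then have "(1 + fps_X :: real fps) $ 0 = 0" by simp
    then show False by simp
  qed
  have "dl r f = dl r g" using D ne unfolding Dl_def by simp
  show "f = g"
  proof (rule fps_ext)
    fix N
    have "(2 * real N - real r) * f $ N = (2 * real N - real r) * g $ N"
      using \<open>dl r f = dl r g\<close> by (metis dl_nth)
    moreover have "2 * real N - real r = 0 \<Longrightarrow> f $ N = g $ N"
    proof -
      assume "2 * real N - real r = 0"
      then have "N < r" using r by linarith
      then show ?thesis using lf lg unfolding low_def by simp
    qed
    ultimately show "f $ N = g $ N" by (cases "2 * real N - real r = 0") auto
  qed
qed


definition FF :: "nat \<Rightarrow> nat \<Rightarrow> nat \<Rightarrow> real fps" where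
  "FF r k i = fps_const ((-1) ^ i) * (EE (r - 1 - i) * GG i (k + i - 1))"

lemma term_id:
  assumes j1: "1 \<le> j" and jr: "j \<le> r" and k1: "k \<ge> 1"
  shows "fps_const ((-1) ^ (j - 1)) * Dl r (EE (r - j) * GG j (k + j - 1)) =
    (1 + fps_X) * (fps_const ((-1) ^ (j - 1)) * (EE (r - j) * GG j (k - 1 + j - 1))) +
    fps_X * ((if j < r then FF r k j else 0) - FF r k (j - 1))"
proof -
  define c where "c = fps_const ((-1) ^ (j - 1) :: real)"
  have cj: "fps_const ((-1) ^ j :: real) = - c"
  proof -
    have "(-1::real) ^ j = - ((-1) ^ (j - 1))" using j1 by (cases j) auto
    then show ?thesis unfolding c_def by simp
  qed
  have rj: "r - j + j = r" using jr by simp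
  have split: "Dl r (EE (r - j) * GG j (k + j - 1)) =
      Dl (r - j) (EE (r - j)) * GG j (k + j - 1) + EE (r - j) * Dl j (GG j (k + j - 1))"
    using Dl_mult[of "r - j" j] rj by simp
  have w: "k + j - 1 - 1 = k - 1 + j - 1" using j1 k1 by simp
  have DGw: "Dl j (GG j (k + j - 1)) = (1 + fps_X) * GG j (k - 1 + j - 1) - fps_X * GG (j - 1) (k - 1 + j - 1)"
    using DG[OF j1, of "k + j - 1"] j1 k1 w by simp
  have Fj1: "FF r k (j - 1) = c * (EE (r - j) * GG (j - 1) (k - 1 + j - 1))"
  proof -
    have "r - 1 - (j - 1) = r - j" using j1 by simp
    moreover have "k + (j - 1) - 1 = k - 1 + j - 1" using j1 k1 by simp
    ultimately show ?thesis unfolding FF_def c_def by simp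
  qed
  show ?thesis
  proof (cases "j < r")
    case True
    have DEr: "Dl (r - j) (EE (r - j)) = - (fps_X * EE (r - 1 - j))"
      using DE[of "r - j"] True by (simp add: diff_commute)
    have Fj: "FF r k j = - c * (EE (r - 1 - j) * GG j (k + j - 1))"
      unfolding FF_def cj ..
    show ?thesis unfolding split DEr DGw Fj Fj1 c_def[symmetric] using True
      by (simp add: algebra_simps)
  next
    case False
    then have rj0: "r - j = 0" using jr by simp
    have DEr: "Dl (r - j) (EE (r - j)) = 0" unfolding rj0 EE_0 by (rule Dl_zero_one)
    show ?thesis unfolding split DEr DGw Fj1 c_def[symmetric] using False rj0
      by (simp add: algebra_simps EE_0)
  qed
qed

lemma DR:
  assumes r1: "r \<ge> 1" and k1: "k \<ge> 1"
  shows "Dl r (RR r k) = (1 + fps_X) * RR r (k - 1) - fps_X * (EE (r - 1) * GG 0 (k - 1))"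
proof -
  obtain r' where r': "r = Suc r'" using r1 by (cases r) auto
  have "Dl r (RR r k) = (\<Sum>j=1..r. fps_const ((-1) ^ (j - 1)) * Dl r (EE (r - j) * GG j (k + j - 1)))"
    unfolding RR_def Dl_sum Dl_cmult ..
  also have "\<dots> = (\<Sum>j=1..r. (1 + fps_X) * (fps_const ((-1) ^ (j - 1)) * (EE (r - j) * GG j (k - 1 + j - 1))) +
    fps_X * ((if j < r then FF r k j else 0) - FF r k (j - 1)))"
    using k1 by (intro sum.cong[OF refl] term_id) auto
  also have "\<dots> = (1 + fps_X) * RR r (k - 1) +
      fps_X * ((\<Sum>j=1..r. (if j < r then FF r k j else 0)) - (\<Sum>j=1..r. FF r k (j - 1)))"
    unfolding RR_def by (simp add: sum.distrib sum_distrib_left sum_subtractf right_diff_distrib)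
  also have "(\<Sum>j=1..r. (if j < r then FF r k j else 0)) = (\<Sum>j=1..r'. FF r k j)"
    unfolding r' by (simp add: sum.cl_ivl_Suc)
  also have "(\<Sum>j=1..r. FF r k (j - 1)) = (\<Sum>i=0..r'. FF r k i)"
    unfolding r' One_nat_def sum.shift_bounds_cl_Suc_ivl by simp
  also have "\<dots> = FF r k 0 + (\<Sum>i=1..r'. FF r k i)"
    by (simp add: sum.atLeast_Suc_atMost)
  also have "FF r k 0 = EE (r - 1) * GG 0 (k - 1)" unfolding FF_def by simp
  finally show ?thesis by (simp add: algebra_simps)
qed

lemma RR_0: "RR r 0 = 0"
  unfolding RR_def by (intro sum.neutral) (auto simp: GG_small)

lemma rep_snoc: "r \<ge> 1 \<Longrightarrow> replicate (r - 1) (1::nat) @ [1] = replicate r 1"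
  by (cases r) (simp_all add: replicate_append_same)

theorem fps_main:
  assumes r1: "r \<ge> 1" and k1: "k \<ge> 1"
  shows "BB (replicate (r - 1) 1 @ [k]) = RR r k"
proof -
  define ks where "ks = replicate (r - 1) (1::nat)"
  have lks: "length ks + 1 = r" "length (ks @ [k']) = r" for k' using r1 unfolding ks_def by auto
  have "BB (ks @ [Suc k']) = RR r (Suc k')" for k'
  proof (induction k')
    case 0
    have L: "BB (ks @ [Suc 0]) = EE r" unfolding ks_def EE_def using rep_snoc[OF r1] by simp
    show ?case
    proof (rule Dl_unique[OF r1])
      show "Dl r (BB (ks @ [Suc 0])) = Dl r (RR r (Suc 0))"
        unfolding L DE[OF r1] using DR[OF r1, of 1] by (simp add: RR_0 GG_0)
      show "low r (BB (ks @ [Suc 0]))" using low_BB[of "ks @ [Suc 0]"] lks by simp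
      show "low r (RR r (Suc 0))" by (rule low_RR)
    qed
  next
    case (Suc k')
    show ?case
    proof (rule Dl_unique[OF r1])
      have "Dl r (BB (ks @ [Suc (Suc k')])) = (1 + fps_X) * dl (length ks + 1) (BB (ks @ [Suc (Suc k')]))"
        unfolding Dl_def lks ..
      also have "\<dots> = (1 + fps_X) * BB (ks @ [Suc k'])" using R1[of "Suc (Suc k')" ks] by simp
      also have "\<dots> = (1 + fps_X) * RR r (Suc k')" using Suc by simp
      also have "\<dots> = Dl r (RR r (Suc (Suc k')))" using DR[OF r1, of "Suc (Suc k')"] by (simp add: GG_0)
      finally show "Dl r (BB (ks @ [Suc (Suc k')])) = Dl r (RR r (Suc (Suc k')))" .
      show "low r (BB (ks @ [Suc (Suc k')]))" using low_BB[of "ks @ [Suc (Suc k')]"] lks by simp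
      show "low r (RR r (Suc (Suc k')))" by (rule low_RR)
    qed
  qed
  then show ?thesis using k1 unfolding ks_def by (metis Suc_diff_1 less_le_trans zero_less_one)
qed

lemma abel_identity:
  fixes a :: "nat \<Rightarrow> real"
  assumes K: "\<And>n. \<bar>a n\<bar> \<le> K" and KS: "\<And>n. \<bar>sum a {..n} - s\<bar> \<le> K2"
    and x: "0 \<le> x" "x < 1"
  shows "(\<Sum>n. a n * x ^ n) - s = (1 - x) * (\<Sum>n. (sum a {..n} - s) * x ^ n)"
    and "summable (\<lambda>n. \<bar>(sum a {..n} - s) * x ^ n\<bar>)"
proof -
  have gx: "summable (\<lambda>n. x ^ n)" using x by (intro summable_geometric) simp
  have ga: "summable (\<lambda>n. norm (a n * x ^ n))"
    by (rule summable_comparison_test[OF _ summable_mult[OF gx, of K]]) (use K x in \<open>auto simp: abs_mult intro!: mult_right_mono\<close>)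
  have gg: "summable (\<lambda>n. norm (x ^ n))" using gx x by simp
  have cp: "(\<Sum>n. a n * x ^ n) * (\<Sum>n. x ^ n) = (\<Sum>k. \<Sum>i\<le>k. a i * x ^ i * x ^ (k - i))"
    by (rule Cauchy_product[OF ga gg])
  have inner: "(\<Sum>i\<le>k. a i * x ^ i * x ^ (k - i)) = sum a {..k} * x ^ k" for k
    by (simp add: sum_distrib_right mult.assoc power_add[symmetric])
  have geo: "(\<Sum>n. x ^ n) = 1 / (1 - x)" using x by (intro suminf_geometric) simp
  have sS: "summable (\<lambda>k. sum a {..k} * x ^ k)"
    using summable_Cauchy_product[OF ga gg] unfolding inner .
  show absS: "summable (\<lambda>n. \<bar>(sum a {..n} - s) * x ^ n\<bar>)"
    by (rule summable_comparison_test[OF _ summable_mult[OF gx, of K2]]) (use KS x in \<open>auto simp: abs_mult intro!: mult_right_mono\<close>)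
  have e1: "(\<Sum>n. a n * x ^ n) = (1 - x) * (\<Sum>k. sum a {..k} * x ^ k)"
    using cp geo x unfolding inner by (simp add: field_simps)
  have e2: "(\<Sum>n. (sum a {..n} - s) * x ^ n) = (\<Sum>k. sum a {..k} * x ^ k) - s * (1 / (1 - x))"
  proof -
    have "(\<Sum>n. (sum a {..n} - s) * x ^ n) = (\<Sum>n. sum a {..n} * x ^ n - s * x ^ n)"
      by (simp add: algebra_simps)
    also have "\<dots> = (\<Sum>k. sum a {..k} * x ^ k) - (\<Sum>n. s * x ^ n)"
      by (rule suminf_diff[OF sS summable_mult[OF gx], symmetric])
    also have "(\<Sum>n. s * x ^ n) = s * (1 / (1 - x))" using suminf_mult[OF gx, of s] geo by simp
    finally show ?thesis .
  qed
  show "(\<Sum>n. a n * x ^ n) - s = (1 - x) * (\<Sum>n. (sum a {..n} - s) * x ^ n)"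
    unfolding e1 e2 using x by (simp add: field_simps)
qed

theorem abel_limit:
  fixes a :: "nat \<Rightarrow> real"
  assumes sa: "summable a"
  shows "((\<lambda>x. \<Sum>n. a n * x ^ n) \<longlongrightarrow> suminf a) (at_left 1)"
proof -
  define s where "s = suminf a"
  define S where "S n = sum a {..n}" for n
  have S_lim: "S \<longlonglongrightarrow> s"
  proof -
    have "(\<lambda>n. sum a {..<n}) \<longlonglongrightarrow> s" using sa unfolding s_def by (simp add: summable_LIMSEQ)
    then have "(\<lambda>n. sum a {..<Suc n}) \<longlonglongrightarrow> s" by (rule LIMSEQ_Suc)
    then show ?thesis unfolding S_def lessThan_Suc_atMost .
  qed
  have "Bseq a" using summable_LIMSEQ_zero[OF sa] by (intro convergent_imp_Bseq convergentI)
  then obtain K where "0 < K" "\<forall>n. norm (a n) \<le> K" by (rule BseqE)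
  then have K: "\<And>n. \<bar>a n\<bar> \<le> K" by simp
  have "Bseq (\<lambda>n. S n - s)" using S_lim by (intro convergent_imp_Bseq convergentI) (rule tendsto_diff[OF _ tendsto_const])
  then obtain K2 where "0 < K2" "\<forall>n. norm (S n - s) \<le> K2" by (rule BseqE)
  then have K2: "\<And>n. \<bar>S n - s\<bar> \<le> K2" by simp
  show ?thesis unfolding s_def[symmetric]
  proof (rule tendstoI)
    fix \<epsilon> :: real assume \<epsilon>: "0 < \<epsilon>"
    obtain N where N: "\<And>n. n \<ge> N \<Longrightarrow> \<bar>S n - s\<bar> < \<epsilon> / 2"
      using LIMSEQ_D[OF S_lim, of "\<epsilon> / 2"] \<epsilon> by auto
    define B where "B = (\<Sum>m<N. \<bar>S m - s\<bar>)"
    have B0: "0 \<le> B" unfolding B_def by (intro sum_nonneg) auto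
    define b where "b = 1 - \<epsilon> / (2 * (B + 1))"
    have b1: "b < 1" unfolding b_def using \<epsilon> B0 by simp
    have "eventually (\<lambda>x. x \<in> {max 0 b<..<1}) (at_left (1::real))"
      by (rule eventually_at_left_real) (use b1 in simp)
    then show "eventually (\<lambda>x. dist (\<Sum>n. a n * x ^ n) s < \<epsilon>) (at_left 1)"
    proof (rule eventually_mono)
      fix x :: real assume "x \<in> {max 0 b<..<1}"
      then have x0: "0 \<le> x" and x1: "x < 1" and xb: "b < x" by auto
      note ai = abel_identity[OF K K2[unfolded S_def] x0 x1]
      have gx: "summable (\<lambda>n. x ^ n)" using x0 x1 by (intro summable_geometric) simp
      define g where "g n = \<epsilon> / 2 * x ^ n + (if n < N then \<bar>S n - s\<bar> else 0)" for n
      have fin: "(\<lambda>n. if n < N then \<bar>S n - s\<bar> else 0) sums B"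
        unfolding B_def by (rule sums_If_finite_set[where A="{..<N}", simplified]) 
      have sg: "summable g" unfolding g_def
        by (intro summable_add summable_mult gx) (use fin in \<open>simp add: sums_iff\<close>)
      have sumg: "suminf g = \<epsilon> / 2 * (1 / (1 - x)) + B"
      proof -
        have "(\<lambda>n. x ^ n) sums (1 / (1 - x))" using x0 x1 by (intro geometric_sums) simp
        then have "(\<lambda>n. \<epsilon> / 2 * x ^ n) sums (\<epsilon> / 2 * (1 / (1 - x)))" by (rule sums_mult)
        then have "g sums (\<epsilon> / 2 * (1 / (1 - x)) + B)" unfolding g_def by (rule sums_add[OF _ fin])
        then show ?thesis by (rule sums_unique[symmetric])
      qed
      have le: "\<bar>(S n - s) * x ^ n\<bar> \<le> g n" for n
      proof (cases "n < N")
        case True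
        have "\<bar>(S n - s) * x ^ n\<bar> = \<bar>S n - s\<bar> * x ^ n" using x0 by (simp add: abs_mult)
        also have "\<dots> \<le> \<bar>S n - s\<bar> * 1" using x0 x1 by (intro mult_left_mono power_le_one) auto
        moreover have "0 \<le> \<epsilon> / 2 * x ^ n" using \<epsilon> x0 by simp
        ultimately show ?thesis unfolding g_def using True by simp
      next
        case False
        have "\<bar>(S n - s) * x ^ n\<bar> = \<bar>S n - s\<bar> * x ^ n" using x0 by (simp add: abs_mult)
        also have "\<dots> \<le> \<epsilon> / 2 * x ^ n" using N[of n] False x0 by (intro mult_right_mono) auto
        finally show ?thesis unfolding g_def using False by simp
      qed
      have "\<bar>\<Sum>n. (S n - s) * x ^ n\<bar> \<le> (\<Sum>n. \<bar>(S n - s) * x ^ n\<bar>)"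
        by (rule summable_rabs) (use ai(2) in \<open>simp add: S_def\<close>)
      also have "\<dots> \<le> suminf g" by (rule suminf_le[OF le]) (use ai(2) sg in \<open>simp_all add: S_def\<close>)
      finally have bound: "\<bar>\<Sum>n. (S n - s) * x ^ n\<bar> \<le> \<epsilon> / 2 * (1 / (1 - x)) + B" unfolding sumg .
      have "dist (\<Sum>n. a n * x ^ n) s = (1 - x) * \<bar>\<Sum>n. (S n - s) * x ^ n\<bar>"
        unfolding dist_real_def ai(1)[folded S_def] using x1 by (simp add: abs_mult)
      also have "\<dots> \<le> (1 - x) * (\<epsilon> / 2 * (1 / (1 - x)) + B)" using x1 bound by (intro mult_left_mono) auto
      also have "\<dots> = \<epsilon> / 2 + (1 - x) * B" using x1 by (simp add: field_simps)
      also have "(1 - x) * B \<le> (1 - b) * B" using xb B0 by (intro mult_right_mono) auto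
      also have "(1 - b) * B = \<epsilon> / 2 * (B / (B + 1))" unfolding b_def using B0 by (simp add: field_simps)
      also have "\<dots> < \<epsilon> / 2 * 1" using \<epsilon> B0 by (intro mult_strict_left_mono) auto
      finally show "dist (\<Sum>n. a n * x ^ n) s < \<epsilon>" by simp
    qed
  qed
qed


definition ev :: "real fps \<Rightarrow> real \<Rightarrow> real" where
  "ev f x = (\<Sum>n. f $ n * x ^ n)"

definition good :: "real fps \<Rightarrow> bool" where
  "good f \<longleftrightarrow> (\<forall>x. 0 \<le> x \<longrightarrow> x < 1 \<longrightarrow> summable (\<lambda>n. norm (f $ n * x ^ n)))"

lemma cp_coef: "(f * g) $ n * x ^ n = (\<Sum>i\<le>n. (f $ i * x ^ i) * (g $ (n - i) * x ^ (n - i)))"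
  for f g :: "real fps"
proof -
  have "(f * g) $ n * x ^ n = (\<Sum>i\<le>n. f $ i * g $ (n - i) * x ^ n)"
    by (simp add: fps_mult_nth atLeast0AtMost sum_distrib_right)
  also have "\<dots> = (\<Sum>i\<le>n. (f $ i * x ^ i) * (g $ (n - i) * x ^ (n - i)))"
    by (intro sum.cong refl) (simp add: power_add[symmetric] mult_ac)
  finally show ?thesis .
qed

lemma good_mult:
  assumes f: "good f" and g: "good g" and x: "0 \<le> x" "x < 1"
  shows "summable (\<lambda>n. norm ((f * g) $ n * x ^ n))" and "ev (f * g) x = ev f x * ev g x"
proof -
  define a where "a i = f $ i * x ^ i" for i
  define b where "b i = g $ i * x ^ i" for i
  have sa: "summable (\<lambda>n. norm (a n))" using f x unfolding good_def a_def by blast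
  have sb: "summable (\<lambda>n. norm (b n))" using g x unfolding good_def b_def by blast
  have co: "(f * g) $ n * x ^ n = (\<Sum>i\<le>n. a i * b (n - i))" for n unfolding a_def b_def cp_coef ..
  have sa': "summable (\<lambda>n. norm (norm (a n)))" using sa by simp
  have sb': "summable (\<lambda>n. norm (norm (b n)))" using sb by simp
  show "summable (\<lambda>n. norm ((f * g) $ n * x ^ n))" unfolding co
  proof (rule summable_comparison_test[OF _ summable_Cauchy_product[OF sa' sb']])
    show "\<exists>N. \<forall>n\<ge>N. norm (norm (\<Sum>i\<le>n. a i * b (n - i))) \<le> (\<Sum>i\<le>n. norm (a i) * norm (b (n - i)))"
    proof (intro exI allI impI)
      fix n :: nat
      show "norm (norm (\<Sum>i\<le>n. a i * b (n - i))) \<le> (\<Sum>i\<le>n. norm (a i) * norm (b (n - i)))"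
        using sum_abs[of "\<lambda>i. a i * b (n - i)" "{..n}"] by (simp add: abs_mult)
    qed
  qed
  show "ev (f * g) x = ev f x * ev g x"
    unfolding ev_def co using Cauchy_product[OF sa sb] unfolding a_def b_def by simp
qed

lemma good_mult': "good f \<Longrightarrow> good g \<Longrightarrow> good (f * g)"
  using good_mult(1) unfolding good_def by blast

lemma good_add: "good f \<Longrightarrow> good g \<Longrightarrow> good (f + g)"
  unfolding good_def
proof (intro allI impI)
  fix x :: real assume f: "\<forall>x. 0 \<le> x \<longrightarrow> x < 1 \<longrightarrow> summable (\<lambda>n. norm (f $ n * x ^ n))"
    and g: "\<forall>x. 0 \<le> x \<longrightarrow> x < 1 \<longrightarrow> summable (\<lambda>n. norm (g $ n * x ^ n))" and x: "0 \<le> x" "x < 1"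
  show "summable (\<lambda>n. norm ((f + g) $ n * x ^ n))"
    by (rule summable_comparison_test[OF _ summable_add[OF f[rule_format, OF x] g[rule_format, OF x]]])
       (auto simp: distrib_right intro: norm_triangle_ineq)
qed

lemma ev_add: "good f \<Longrightarrow> good g \<Longrightarrow> 0 \<le> x \<Longrightarrow> x < 1 \<Longrightarrow> ev (f + g) x = ev f x + ev g x"
  unfolding ev_def good_def
  by (simp add: distrib_right suminf_add summable_norm_cancel)

lemma good_zero: "good 0"
  unfolding good_def by simp

lemma ev_zero: "ev 0 x = 0"
  unfolding ev_def by simp

lemma good_sum: "(\<And>i. i \<in> S \<Longrightarrow> good (f i)) \<Longrightarrow> good (\<Sum>i\<in>S. f i)"
  by (induction S rule: infinite_finite_induct) (auto intro: good_add good_zero)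

lemma ev_sum: "(\<And>i. i \<in> S \<Longrightarrow> good (f i)) \<Longrightarrow> 0 \<le> x \<Longrightarrow> x < 1 \<Longrightarrow>
    ev (\<Sum>i\<in>S. f i) x = (\<Sum>i\<in>S. ev (f i) x)"
  by (induction S rule: infinite_finite_induct) (auto simp: ev_zero ev_add good_sum)

lemma good_const:
  assumes "good f" shows "good (fps_const c * f)"
  unfolding good_def
proof (intro allI impI)
  fix x :: real assume x: "0 \<le> x" "x < 1"
  have "summable (\<lambda>n. \<bar>c\<bar> * norm (f $ n * x ^ n))"
    using assms x unfolding good_def by (intro summable_mult) blast
  then show "summable (\<lambda>n. norm ((fps_const c * f) $ n * x ^ n))" by (simp add: abs_mult mult.assoc)
qed

lemma ev_const: "good f \<Longrightarrow> 0 \<le> x \<Longrightarrow> x < 1 \<Longrightarrow> ev (fps_const c * f) x = c * ev f x"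
  unfolding ev_def good_def by (simp add: mult.assoc suminf_mult summable_norm_cancel)

lemma summable_cc: "\<forall>x\<in>set ks. 0 < x \<Longrightarrow> summable (cc ks)"
  using summable_dd[of ks] unfolding cc_def[abs_def] by simp

lemma good_BB:
  assumes "\<forall>x\<in>set ks. 0 < x"
  shows "good (BB ks)"
proof -
  have "Bseq (cc ks)" using summable_LIMSEQ_zero[OF summable_cc[OF assms]]
    by (intro convergent_imp_Bseq convergentI)
  then obtain K where "0 < K" "\<forall>n. norm (cc ks n) \<le> K" by (rule BseqE)
  then have K: "\<And>n. \<bar>cc ks n\<bar> \<le> K" by simp
  show ?thesis unfolding good_def
  proof (intro allI impI)
    fix x :: real assume x: "0 \<le> x" "x < 1"
    have gx: "summable (\<lambda>n. x ^ n)" using x by (intro summable_geometric) simp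
    show "summable (\<lambda>n. norm (BB ks $ n * x ^ n))"
      by (rule summable_comparison_test[OF _ summable_mult[OF gx, of K]])
         (use K x in \<open>auto simp: BB_nth abs_mult intro!: mult_right_mono\<close>)
  qed
qed

lemma lim_BB:
  assumes "\<forall>x\<in>set ks. 0 < x"
  shows "((\<lambda>x. ev (BB ks) x) \<longlongrightarrow> suminf (cc ks)) (at_left 1)"
  unfolding ev_def BB_nth by (rule abel_limit[OF summable_cc[OF assms]])

lemma Tbar_eq:
  assumes "\<forall>x\<in>set ks. 0 < x"
  shows "Tbar ks = 2 ^ length ks * suminf (cc ks)"
proof (cases "ks = []")
  case True
  have "cc [] = (\<lambda>N. if N = 0 then 1 else 0)" by (auto simp: cc_def dd_nil)
  moreover have "(\<lambda>N. if N = 0 then 1 else 0 :: real) sums 1"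
    using sums_single[of 0 "\<lambda>_. 1::real"] by simp
  ultimately show ?thesis using True by (simp add: Tbar_def sums_iff)
next
  case False
  have "cc ks = Tbar_layer ks" by (auto simp: cc_def dd_def False power_mult_distrib[symmetric])
  then show ?thesis using False by (simp add: Tbar_def)
qed


lemma pos_rep: "\<forall>x\<in>set (replicate m (1::nat)). 0 < x" by simp

lemma pos_Iset: "c \<in> Iset w j \<Longrightarrow> \<forall>x\<in>set c. 0 < x" unfolding Iset_def by auto

lemma len_Iset: "c \<in> Iset w j \<Longrightarrow> length c = j" unfolding Iset_def by auto

lemma good_EE: "good (EE m)" unfolding EE_def by (rule good_BB[OF pos_rep])

lemma good_GG: "good (GG j w)" unfolding GG_def by (intro good_sum good_BB pos_Iset)

lemma ev_GG: "0 \<le> x \<Longrightarrow> x < 1 \<Longrightarrow> ev (GG j w) x = (\<Sum>c\<in>Iset w j. ev (BB c) x)"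
  unfolding GG_def by (intro ev_sum good_BB pos_Iset)

lemma ev_RR:
  assumes x: "0 \<le> x" "x < 1"
  shows "ev (RR r k) x = (\<Sum>j=1..r. (-1) ^ (j - 1) * (ev (EE (r - j)) x * (\<Sum>c\<in>Iset (k + j - 1) j. ev (BB c) x)))"
proof -
  have "ev (RR r k) x = (\<Sum>j=1..r. ev (fps_const ((-1) ^ (j - 1)) * (EE (r - j) * GG j (k + j - 1))) x)"
    unfolding RR_def using x by (intro ev_sum good_const good_mult' good_EE good_GG)
  also have "\<dots> = (\<Sum>j=1..r. (-1) ^ (j - 1) * (ev (EE (r - j)) x * (\<Sum>c\<in>Iset (k + j - 1) j. ev (BB c) x)))"
  proof (rule sum.cong[OF refl])
    fix j
    show "ev (fps_const ((-1) ^ (j - 1)) * (EE (r - j) * GG j (k + j - 1))) x =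
        (-1) ^ (j - 1) * (ev (EE (r - j)) x * (\<Sum>c\<in>Iset (k + j - 1) j. ev (BB c) x))"
      using x by (simp add: ev_const good_mult' good_EE good_GG good_mult(2) ev_GG)
  qed
  finally show ?thesis .
qed

theorem mainTheorem6:
  fixes r k :: nat
  assumes "r \<ge> 1" and "k \<ge> 1"
  shows "Tbar (replicate (r - 1) 1 @ [k]) =
         (\<Sum>j=1..r. (-1) ^ (j - 1) * Tbar (replicate (r - j) 1) * W (k + j - 1) j)"
proof -
  define L where "L = replicate (r - 1) (1::nat) @ [k]"
  have posL: "\<forall>x\<in>set L. 0 < x" unfolding L_def using assms by auto
  have lenL: "length L = r" unfolding L_def using assms by simp
  define T where "T ks = suminf (cc ks)" for ks
  define RHS where "RHS = (\<Sum>j=1..r. (-1) ^ (j - 1) * (T (replicate (r - j) 1) * (\<Sum>c\<in>Iset (k + j - 1) j. T c)))"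
  have lim1: "((\<lambda>x. ev (BB L) x) \<longlongrightarrow> T L) (at_left 1)" unfolding T_def by (rule lim_BB[OF posL])
  have lim2: "((\<lambda>x. (\<Sum>j=1..r. (-1) ^ (j - 1) * (ev (EE (r - j)) x * (\<Sum>c\<in>Iset (k + j - 1) j. ev (BB c) x))))
      \<longlongrightarrow> RHS) (at_left 1)"
    unfolding RHS_def EE_def T_def
    by (intro tendsto_sum tendsto_mult tendsto_const lim_BB pos_rep pos_Iset)
  have ev_eq: "\<forall>\<^sub>F x in at_left 1. ev (BB L) x =
      (\<Sum>j=1..r. (-1) ^ (j - 1) * (ev (EE (r - j)) x * (\<Sum>c\<in>Iset (k + j - 1) j. ev (BB c) x)))"
  proof -
    have "\<forall>\<^sub>F x in at_left (1::real). x \<in> {0<..<1}" using eventually_at_left_real[of 0 "1::real"] by simp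
    then show ?thesis
    proof (rule eventually_mono)
      fix x :: real assume "x \<in> {0<..<1}"
      then have x: "0 \<le> x" "x < 1" by auto
      show "ev (BB L) x = (\<Sum>j=1..r. (-1) ^ (j - 1) * (ev (EE (r - j)) x * (\<Sum>c\<in>Iset (k + j - 1) j. ev (BB c) x)))"
        unfolding L_def fps_main[OF assms] by (rule ev_RR[OF x])
    qed
  qed
  have lim2': "((\<lambda>x. ev (BB L) x) \<longlongrightarrow> RHS) (at_left 1)"
    by (rule tendsto_cong[THEN iffD2, OF ev_eq lim2])
  have TL: "T L = RHS" using tendsto_unique[OF trivial_limit_at_left_real lim1 lim2'] .
  have "Tbar L = 2 ^ r * T L" unfolding T_def using Tbar_eq[OF posL] lenL by simp
  also have "\<dots> = 2 ^ r * RHS" unfolding TL ..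
  also have "\<dots> = (\<Sum>j=1..r. (-1) ^ (j - 1) * Tbar (replicate (r - j) 1) * W (k + j - 1) j)"
    unfolding RHS_def sum_distrib_left[of "(2::real) ^ r"]
  proof (rule sum.cong[OF refl])
    fix j assume j: "j \<in> {1..r}"
    have e1: "Tbar (replicate (r - j) 1) = 2 ^ (r - j) * T (replicate (r - j) 1)"
      unfolding T_def using Tbar_eq[OF pos_rep] by simp
    have e2: "W (k + j - 1) j = 2 ^ j * (\<Sum>c\<in>Iset (k + j - 1) j. T c)"
      unfolding W_def sum_distrib_left T_def
      by (intro sum.cong refl) (simp add: Tbar_eq pos_Iset len_Iset)
    have e3: "(2::real) ^ r = 2 ^ (r - j) * 2 ^ j" using j by (simp add: power_add[symmetric])
    show "2 ^ r * ((-1) ^ (j - 1) * (T (replicate (r - j) 1) * (\<Sum>c\<in>Iset (k + j - 1) j. T c))) =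
        (-1) ^ (j - 1) * Tbar (replicate (r - j) 1) * W (k + j - 1) j"
    proof -
      have "(2::real) ^ r * ((-1) ^ (j - 1) * (T (replicate (r - j) 1) * (\<Sum>c\<in>Iset (k + j - 1) j. T c))) =
        (-1) ^ (j - 1) * (2 ^ (r - j) * T (replicate (r - j) 1)) * (2 ^ j * (\<Sum>c\<in>Iset (k + j - 1) j. T c))"
        unfolding e3 by (simp only: mult_ac)
      then show ?thesis unfolding e1 e2 .
    qed
  qed
  finally show ?thesis unfolding L_def .
qed

end
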